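(* Let $C,D\subseteq\mathbb{R}^n$ be convex cones (nonempty, closed under addition and multiplication by nonnegative reals) that are closed and have nonempty interior in the Euclidean topology, and suppose $\langle c,d\rangle\ge0$ for all $c\in C$, $d\in D$, where $\langle\cdot,\cdot\rangle$ is the standard inner product. Equip $D$ with the weak upper topology $w(D,C)$. Then for every linear functional $\varphi\colon D\to[0,\infty)$ which is lower semicontinuous with respect to $w(D,C)$ there is a unique $x\in C$ such that $\varphi(y)=\langle x,y\rangle$ for all $y\in D$.
   Context: $[0,\infty)$ and $\overline{\mathbb{R}}_+=[0,+\infty]$ carry the upper topology, whose open sets are $\emptyset$, the whole space and the intervals $\{t\mid t>r\}$ for $r\in[0,\infty)$; a function is lower semicontinuous if it is continuous into this topology. The weak upper topology $w(D,C)$ on $D$ is the coarsest topology making all maps $y\mapsto\langle x,y\rangle$, $x\in C$, lower semicontinuous. A functional $\varphi\colon D\to[0,\infty)$ is linear if $\varphi(y+z)=\varphi(y)+\varphi(z)$ and $\varphi(ry)=r\varphi(y)$ for all $y,z\in D$, $r\ge0$. *)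

theory Defs
  imports "HOL-Analysis.Analysis"
begin

text \<open>The upper topology on [0,\<infinity>): open sets are the empty set, the whole space
  and the rays {t. t > r} for r \<ge> 0 (the topology generated by these sets has
  exactly these open sets, since they form a chain closed under unions).\<close>
definition upper_topology :: "real topology" where
  "upper_topology = topology_generated_by ({{0..}} \<union> {{t. r < t} | r. 0 \<le> r})"

definition lsc_map :: "'a topology \<Rightarrow> ('a \<Rightarrow> real) \<Rightarrow> bool" where
  "lsc_map X f \<longleftrightarrow> continuous_map X upper_topology f"

text \<open>The weak upper topology w(D,C) on D: the coarsest topology on D making all
  maps y \<mapsto> \<langle>x,y\<rangle>, x \<in> C, lower semicontinuous (initial topology, generated by
  D itself and the preimages of upper-open sets).\<close>
definition weak_upper_topology :: "'a::real_inner set \<Rightarrow> 'a set \<Rightarrow> 'a topology" where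
  "weak_upper_topology D C = topology_generated_by
     ({D} \<union> {{y \<in> D. inner x y \<in> U} | x U. x \<in> C \<and> openin upper_topology U})"

definition linear_on_cone :: "'a::real_vector set \<Rightarrow> ('a \<Rightarrow> real) \<Rightarrow> bool" where
  "linear_on_cone D \<phi> \<longleftrightarrow>
     (\<forall>y\<in>D. \<forall>z\<in>D. \<phi> (y + z) = \<phi> y + \<phi> z) \<and>
     (\<forall>y\<in>D. \<forall>r::real. 0 \<le> r \<longrightarrow> \<phi> (r *\<^sub>R y) = r * \<phi> y)"

end

theory Submission
  imports Defs
begin

lemma upper_up:
  fixes a b :: real
  assumes "generate_topology_on S V" "S = ({{0..}} \<union> {{t. r < t} | r. 0 \<le> r})"
    "a \<in> V" "a \<le> b"
  shows "b \<in> V"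
  using assms
proof (induction arbitrary: a rule: generate_topology_on.induct)
  case Empty then show ?case by simp
next
  case (Int x y) then show ?case by blast
next
  case (UN K) then show ?case by blast
next
  case (Basis s) then show ?case by (auto intro: order_trans less_le_trans)
qed

lemma weak_up:
  fixes C D :: "'a::real_inner set"
  assumes "generate_topology_on S U"
    "S = ({D} \<union> {{y \<in> D. inner x y \<in> U} | x U. x \<in> C \<and> openin upper_topology U})"
    "y0 \<in> U" "y1 \<in> D" "\<forall>c\<in>C. inner c y0 \<le> inner c y1"
  shows "y1 \<in> U"
  using assms
proof (induction rule: generate_topology_on.induct)
  case Empty then show ?case by simp
next
  case (Int x y) then show ?case by blast
next
  case (UN K) then show ?case by blast
next
  case (Basis s)
  then consider "s = D" | x V where "s = {y \<in> D. inner x y \<in> V}" "x \<in> C" "openin upper_topology V"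
    by blast
  then show ?case
  proof cases
    case 1 then show ?thesis using Basis by simp
  next
    case 2
    have g: "generate_topology_on ({{0..}} \<union> {{t. r < t} | r. 0 \<le> r}) V"
      using 2(3) unfolding upper_topology_def by (rule openin_topology_generated_by)
    have "inner x y0 \<in> V" using Basis 2 by simp
    then have "inner x y1 \<in> V"
      using upper_up[OF g refl] Basis(5) 2(2) by blast
    then show ?thesis using 2 Basis by simp
  qed
qed

theorem mainTheorem8:
  fixes C D :: "(real ^ 'n) set" and \<phi> :: "real ^ 'n \<Rightarrow> real"
  assumes "convex_cone C" and "closed C" and "interior C \<noteq> {}"
    and "convex_cone D" and "closed D" and "interior D \<noteq> {}"
    and "\<forall>c\<in>C. \<forall>d\<in>D. inner c d \<ge> 0"
    and "\<forall>y\<in>D. \<phi> y \<ge> 0"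
    and "linear_on_cone D \<phi>"
    and "lsc_map (weak_upper_topology D C) \<phi>"
  shows "\<exists>!x. x \<in> C \<and> (\<forall>y\<in>D. \<phi> y = inner x y)"
proof -
  note cD = assms(4) and cC = assms(1)
  have add: "\<And>y z. y \<in> D \<Longrightarrow> z \<in> D \<Longrightarrow> \<phi> (y + z) = \<phi> y + \<phi> z"
    and scl: "\<And>y r. y \<in> D \<Longrightarrow> 0 \<le> r \<Longrightarrow> \<phi> (r *\<^sub>R y) = r * \<phi> y"
    using assms(9) unfolding linear_on_cone_def by auto
  obtain y0 where "y0 \<in> interior D" using assms(6) by blast
  then obtain e where e: "e > 0" "ball y0 e \<subseteq> D"
    using mem_interior by blast
  have y0D: "y0 \<in> D" using e by auto
  have key0: "\<phi> (t *\<^sub>R y0 + v) - t * \<phi> y0 = \<phi> (s *\<^sub>R y0 + v) - s * \<phi> y0"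
    if "0 \<le> t" "t \<le> s" "t *\<^sub>R y0 + v \<in> D" for t s v
  proof -
    have sD: "(s - t) *\<^sub>R y0 \<in> D" using convex_cone_scaleR[OF cD _ y0D] that by simp
    have "s *\<^sub>R y0 + v = (t *\<^sub>R y0 + v) + (s - t) *\<^sub>R y0"
      by (simp add: algebra_simps)
    then have "\<phi> (s *\<^sub>R y0 + v) = \<phi> ((t *\<^sub>R y0 + v) + (s - t) *\<^sub>R y0)" by (rule arg_cong)
    also have "\<dots> = \<phi> (t *\<^sub>R y0 + v) + \<phi> ((s - t) *\<^sub>R y0)" by (rule add[OF that(3) sD])
    also have "\<phi> ((s - t) *\<^sub>R y0) = (s - t) * \<phi> y0" using scl[OF y0D] that by simp
    finally have "\<phi> (s *\<^sub>R y0 + v) = \<phi> (t *\<^sub>R y0 + v) + (s - t) * \<phi> y0" .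
    then show ?thesis by (simp add: algebra_simps)
  qed
  have key: "\<phi> (t *\<^sub>R y0 + v) - t * \<phi> y0 = \<phi> (s *\<^sub>R y0 + v) - s * \<phi> y0"
    if "0 \<le> t" "0 \<le> s" "t *\<^sub>R y0 + v \<in> D" "s *\<^sub>R y0 + v \<in> D" for t s v
  proof (cases "t \<le> s")
    case True then show ?thesis using key0[OF that(1) True that(3)] by linarith
  next
    case False then show ?thesis using key0[OF that(2) _ that(4), of t] by linarith
  qed
  define T where "T v = norm v / e + 1" for v :: "real ^ 'n"
  have Tpos: "T v > 0" for v
  proof -
    have "norm v / e \<ge> 0" using e by simp
    then show ?thesis unfolding T_def by linarith
  qed
  have TD: "T v *\<^sub>R y0 + v \<in> D" for v
  proof -
    have "norm v < e * T v" using e unfolding T_def by (simp add: algebra_simps)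
    then have "norm ((1 / T v) *\<^sub>R v) < e" using Tpos[of v]
      by (simp add: field_simps)
    then have "y0 + (1 / T v) *\<^sub>R v \<in> D" using e by (auto simp: dist_norm)
    then have "T v *\<^sub>R (y0 + (1 / T v) *\<^sub>R v) \<in> D"
      using convex_cone_scaleR[OF cD] Tpos[of v] by simp
    then show ?thesis using Tpos[of v] by (simp add: algebra_simps)
  qed
  define L where "L v = \<phi> (T v *\<^sub>R y0 + v) - T v * \<phi> y0" for v
  have L: "L v = \<phi> (t *\<^sub>R y0 + v) - t * \<phi> y0" if "0 \<le> t" "t *\<^sub>R y0 + v \<in> D" for t v
    unfolding L_def using key[OF _ that(1) TD that(2)] Tpos[of v] by simp
  have LD: "L y = \<phi> y" if "y \<in> D" for y using L[of 0 y] that by simp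
  have Ladd: "L (u + v) = L u + L v" for u v
  proof -
    have "(T u + T v) *\<^sub>R y0 + (u + v) = (T u *\<^sub>R y0 + u) + (T v *\<^sub>R y0 + v)"
      by (simp add: algebra_simps)
    moreover have "\<dots> \<in> D" using convex_cone_add[OF cD TD TD] .
    ultimately show ?thesis
      using L[of "T u + T v" "u + v"] Tpos[of u] Tpos[of v] add[OF TD TD]
      unfolding L_def by (simp add: algebra_simps)
  qed
  have L0: "L 0 = 0" using Ladd[of 0 0] by simp
  have Lneg: "L (- u) = - L u" for u using Ladd[of u "- u"] L0 by simp
  have Lpos: "L (c *\<^sub>R u) = c * L u" if "0 \<le> c" for c u
  proof -
    have "(c * T u) *\<^sub>R y0 + c *\<^sub>R u = c *\<^sub>R (T u *\<^sub>R y0 + u)"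
      by (simp add: algebra_simps)
    moreover have "\<dots> \<in> D" using convex_cone_scaleR[OF cD that TD] .
    ultimately show ?thesis
      using L[of "c * T u" "c *\<^sub>R u"] Tpos[of u] that scl[OF TD that]
      unfolding L_def by (simp add: algebra_simps)
  qed
  have Lscl: "L (c *\<^sub>R u) = c * L u" for c u
  proof (cases "0 \<le> c")
    case True then show ?thesis using Lpos by simp
  next
    case False
    have "L (c *\<^sub>R u) = L (- ((- c) *\<^sub>R u))" by simp
    also have "\<dots> = - ((- c) * L u)" using Lneg Lpos[of "- c" u] False by simp
    finally show ?thesis by simp
  qed
  have lin: "linear L"
    by (rule linearI) (auto simp: Ladd Lscl)
  define x where "x = adjoint L 1"
  have Lx: "L v = inner x v" for v
    using adjoint_works[OF lin, of v 1] unfolding x_def by (simp add: inner_commute)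
  have rep: "\<forall>y\<in>D. \<phi> y = inner x y" using LD Lx by simp
  have xC: "x \<in> C"
  proof (rule ccontr)
    assume nx: "x \<notin> C"
    obtain a b where ab: "inner a x < b" "\<forall>c\<in>C. b < inner a c"
      using separating_hyperplane_closed_point[OF _ assms(2) nx] cC
      unfolding convex_cone_def by blast
    have b0: "b < 0" using ab(2) convex_cone_contains_0[OF cC] by auto
    have aC: "inner c a \<ge> 0" if "c \<in> C" for c
    proof (rule ccontr)
      assume "\<not> inner c a \<ge> 0"
      then have neg: "inner a c < 0" by (simp add: inner_commute)
      define l where "l = b / inner a c"
      have "l \<ge> 0" using b0 neg unfolding l_def by (simp add: divide_nonpos_neg)
      then have "l *\<^sub>R c \<in> C" using convex_cone_scaleR[OF cC _ that] by simp
      then have "b < inner a (l *\<^sub>R c)" using ab by blast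
      also have "\<dots> = b" using neg unfolding l_def by simp
      finally show False by simp
    qed
    define t where "t = e / (2 * (norm a + 1))"
    have t: "t > 0" unfolding t_def by (rule divide_pos_pos[OF e(1)]) (smt (verit) norm_ge_zero)
    have "norm (t *\<^sub>R a) < e"
    proof -
      have "norm (t *\<^sub>R a) = t * norm a" using t by simp
      also have "\<dots> = e * norm a / (2 * (norm a + 1))" unfolding t_def by simp
      also have "\<dots> < e"
      proof -
        have p: "2 * (norm a + 1) > 0" by (smt (verit) norm_ge_zero)
        have "e * norm a < e * (2 * (norm a + 1))" using e by (intro mult_strict_left_mono) (smt (verit) norm_ge_zero)+
        then show ?thesis by (subst pos_divide_less_eq[OF p])
      qed
      finally show ?thesis .
    qed
    then have y1D: "y0 + t *\<^sub>R a \<in> D" using e by (auto simp: dist_norm)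
    define y1 where "y1 = y0 + t *\<^sub>R a"
    have y1D': "y1 \<in> D" using y1D unfolding y1_def .
    have less: "\<phi> y1 < \<phi> y0"
      using rep y1D' y0D ab(1) b0 t unfolding y1_def
      by (simp add: inner_add_right inner_commute mult_pos_neg)
    define r where "r = \<phi> y1"
    have r0: "0 \<le> r" using assms(8) y1D' unfolding r_def by simp
    have ts: "topspace (weak_upper_topology D C) = D"
      unfolding weak_upper_topology_def by auto
    have "openin upper_topology {t. r < t}"
      unfolding upper_topology_def by (rule topology_generated_by_Basis) (use r0 in blast)
    then have "openin (weak_upper_topology D C) {y \<in> D. \<phi> y \<in> {t. r < t}}"
      using assms(10) ts unfolding lsc_map_def continuous_map_def by auto
    then have g: "generate_topology_on
        ({D} \<union> {{y \<in> D. inner x y \<in> U} | x U. x \<in> C \<and> openin upper_topology U})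
        {y \<in> D. \<phi> y \<in> {t. r < t}}"
      unfolding weak_upper_topology_def by (rule openin_topology_generated_by)
    have mono: "\<forall>c\<in>C. inner c y0 \<le> inner c y1"
      using aC t unfolding y1_def by (simp add: inner_add_right)
    have "y1 \<in> {y \<in> D. \<phi> y \<in> {t. r < t}}"
      using weak_up[OF g refl _ y1D' mono] y0D less unfolding r_def by simp
    then show False unfolding r_def by simp
  qed
  show ?thesis
  proof (rule ex1I[of _ x])
    show "x \<in> C \<and> (\<forall>y\<in>D. \<phi> y = inner x y)" using xC rep by simp
  next
    fix x' assume x': "x' \<in> C \<and> (\<forall>y\<in>D. \<phi> y = inner x' y)"
    define d where "d = x' - x"
    have dz: "inner d y = 0" if "y \<in> D" for y
      using x' rep that unfolding d_def by (simp add: inner_diff_left)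
    define t where "t = e / (2 * (norm d + 1))"
    have t: "t > 0" unfolding t_def by (rule divide_pos_pos[OF e(1)]) (smt (verit) norm_ge_zero)
    have "norm (t *\<^sub>R d) < e"
    proof -
      have "norm (t *\<^sub>R d) = t * norm d" using t by simp
      also have "\<dots> = e * norm d / (2 * (norm d + 1))" unfolding t_def by simp
      also have "\<dots> < e"
      proof -
        have p: "2 * (norm d + 1) > 0" by (smt (verit) norm_ge_zero)
        have "e * norm d < e * (2 * (norm d + 1))" using e by (intro mult_strict_left_mono) (smt (verit) norm_ge_zero)+
        then show ?thesis by (subst pos_divide_less_eq[OF p])
      qed
      finally show ?thesis .
    qed
    then have "y0 + t *\<^sub>R d \<in> D" using e by (auto simp: dist_norm)
    then have "inner d (y0 + t *\<^sub>R d) = 0" by (rule dz)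
    then have "t * inner d d = 0" using dz[OF y0D] by (simp add: inner_add_right)
    then have "d = 0" using t by simp
    then show "x' = x" unfolding d_def by simp
  qed
qed

end
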